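(* Let $\mathcal{H}=(V,\mathcal{A})$ be a HyTN (possibly containing both multi-head and multi-tail hyperarcs) all of whose weights are integers, and suppose $\mathcal{H}$ is consistent. Let $T=\sum_{A\in\mathcal{A}}\sum_{v} |w_A(v)|$, where for each hyperarc $A$ the inner sum ranges over the nodes $v$ at which $w_A$ is defined (the heads of a multi-head hyperarc, the tails of a multi-tail hyperarc). Then $\mathcal{H}$ admits a feasible scheduling $s:V\to\{-T,-T+1,\ldots,T-1,T\}$ (in particular an integral one).
   Context: A Hyper Temporal Network (HyTN) is a pair $\mathcal{H}=(V,\mathcal{A})$ with $V$ a finite set of nodes (timepoints) and $\mathcal{A}$ a finite set of hyperarcs. Each hyperarc is either multi-head or multi-tail. A multi-head hyperarc $A=(t_A,H_A,w_A)$ has a tail $t_A\in V$, a nonempty head set $H_A\subseteq V\setminus\{t_A\}$ and weights $w_A(v)\in\mathbb{R}$ for $v\in H_A$. A multi-tail hyperarc $A=(T_A,h_A,w_A)$ has a head $h_A\in V$, a nonempty tail set $T_A\subseteq V\setminus\{h_A\}$ and weights $w_A(v)\in\mathbb{R}$ for $v\in T_A$. A hyperarc with exactly one head (resp. one tail) is a standard arc $(t,h,w)$. A scheduling $s:V\to\mathbb{R}$ is feasible if: for every standard arc $(t,h,w)$, $s(h)-s(t)\le w$; for every multi-head hyperarc $A$, $s(t_A)\ge\min_{v\in H_A}\{s(v)-w_A(v)\}$; for every multi-tail hyperarc $A$, $s(h_A)\le\max_{v\in T_A}\{s(v)+w_A(v)\}$. $\mathcal{H}$ is consistent if it admits a feasible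 scheduling. *)

theory Defs
  imports Main "HOL.Real"
begin

text \<open>A hyperarc is either multi-head (tail, head set, weights on heads)
or multi-tail (tail set, head, weights on tails). A standard arc is a
hyperarc with a single head (resp. single tail).\<close>

datatype 'v hyperarc =
    MultiHead 'v "'v set" "'v \<Rightarrow> real"
  | MultiTail "'v set" 'v "'v \<Rightarrow> real"

fun arc_wdom :: "'v hyperarc \<Rightarrow> 'v set" where
  "arc_wdom (MultiHead t H w) = H"
| "arc_wdom (MultiTail T h w) = T"

fun arc_weight :: "'v hyperarc \<Rightarrow> 'v \<Rightarrow> real" where
  "arc_weight (MultiHead t H w) = w"
| "arc_weight (MultiTail T h w) = w"

fun wf_hyperarc :: "'v set \<Rightarrow> 'v hyperarc \<Rightarrow> bool" where
  "wf_hyperarc V (MultiHead t H w) \<longleftrightarrow> t \<in> V \<and> H \<noteq> {} \<and> H \<subseteq> V - {t}"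
| "wf_hyperarc V (MultiTail T h w) \<longleftrightarrow> h \<in> V \<and> T \<noteq> {} \<and> T \<subseteq> V - {h}"

definition HyTN :: "'v set \<Rightarrow> 'v hyperarc set \<Rightarrow> bool" where
  "HyTN V A \<longleftrightarrow> finite V \<and> finite A \<and> (\<forall>a\<in>A. wf_hyperarc V a)"

text \<open>Satisfaction of a hyperarc by a scheduling. For a standard arc
(single head / single tail) this is exactly s(h) - s(t) \<le> w.\<close>
fun satisfies :: "('v \<Rightarrow> real) \<Rightarrow> 'v hyperarc \<Rightarrow> bool" where
  "satisfies s (MultiHead t H w) \<longleftrightarrow> s t \<ge> Min ((\<lambda>v. s v - w v) ` H)"
| "satisfies s (MultiTail T h w) \<longleftrightarrow> s h \<le> Max ((\<lambda>v. s v + w v) ` T)"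

definition feasible :: "'v hyperarc set \<Rightarrow> ('v \<Rightarrow> real) \<Rightarrow> bool" where
  "feasible A s \<longleftrightarrow> (\<forall>a\<in>A. satisfies s a)"

definition consistent :: "'v hyperarc set \<Rightarrow> bool" where
  "consistent A \<longleftrightarrow> (\<exists>s. feasible A s)"

definition integer_weights :: "'v hyperarc set \<Rightarrow> bool" where
  "integer_weights A \<longleftrightarrow> (\<forall>a\<in>A. \<forall>v\<in>arc_wdom a. arc_weight a v \<in> \<int>)"

definition total_weight :: "'v hyperarc set \<Rightarrow> real" where
  "total_weight A = (\<Sum>a\<in>A. \<Sum>v\<in>arc_wdom a. \<bar>arc_weight a v\<bar>)"

end

theory Submission
  imports Defs
begin

lemma witness:
  assumes wf: "wf_hyperarc V a" and fin: "finite V" and sat: "satisfies s0 a"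
  shows "\<exists>x y v. v \<in> arc_wdom a \<and> x \<in> V \<and> y \<in> V \<and> s0 x - s0 y \<le> arc_weight a v
          \<and> (\<forall>s. s x - s y \<le> arc_weight a v \<longrightarrow> satisfies s a)"
proof (cases a)
  case (MultiHead t H w)
  have fH: "finite H" using wf fin MultiHead by (auto intro: finite_subset)
  have ne: "H \<noteq> {}" using wf MultiHead by auto
  have "Min ((\<lambda>v. s0 v - w v) ` H) \<in> (\<lambda>v. s0 v - w v) ` H"
    using fH ne by (intro Min_in) auto
  then obtain v where v: "v \<in> H" "Min ((\<lambda>v. s0 v - w v) ` H) = s0 v - w v" by auto
  have "\<forall>s. s v - s t \<le> w v \<longrightarrow> satisfies s a"
  proof (intro allI impI)
    fix s :: "'a \<Rightarrow> real" assume "s v - s t \<le> w v"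
    moreover have "Min ((\<lambda>v. s v - w v) ` H) \<le> s v - w v" using fH v by (intro Min_le) auto
    ultimately show "satisfies s a" using MultiHead by simp
  qed
  then show ?thesis using v sat wf MultiHead by (intro exI[of _ v] exI[of _ t] exI[of _ v]) auto
next
  case (MultiTail T h w)
  have fT: "finite T" using wf fin MultiTail by (auto intro: finite_subset)
  have ne: "T \<noteq> {}" using wf MultiTail by auto
  have "Max ((\<lambda>v. s0 v + w v) ` T) \<in> (\<lambda>v. s0 v + w v) ` T"
    using fT ne by (intro Max_in) auto
  then obtain v where v: "v \<in> T" "Max ((\<lambda>v. s0 v + w v) ` T) = s0 v + w v" by auto
  have "\<forall>s. s h - s v \<le> w v \<longrightarrow> satisfies s a"
  proof (intro allI impI)
    fix s :: "'a \<Rightarrow> real" assume "s h - s v \<le> w v"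
    moreover have "s v + w v \<le> Max ((\<lambda>v. s v + w v) ` T)" using fT v by (intro Max_ge) auto
    ultimately show "satisfies s a" using MultiTail by simp
  qed
  then show ?thesis using v sat wf MultiTail by (intro exI[of _ h] exI[of _ v] exI[of _ v]) auto
qed

theorem lemma1:
  fixes V :: "'v set" and A :: "'v hyperarc set"
  assumes "HyTN V A"
    and "integer_weights A"
    and "consistent A"
  shows "\<exists>s. feasible A s \<and>
           (\<forall>v\<in>V. s v \<in> \<int> \<and> - total_weight A \<le> s v \<and> s v \<le> total_weight A)"
proof -
  have finV: "finite V" and finA: "finite A" and wfA: "\<forall>a\<in>A. wf_hyperarc V a"
    using assms(1) unfolding HyTN_def by auto
  obtain s0 where s0: "feasible A s0" using assms(3) unfolding consistent_def by auto
  have "\<forall>a\<in>A. \<exists>p. snd (snd p) \<in> arc_wdom a \<and> fst p \<in> V \<and> fst (snd p) \<in> V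
     \<and> s0 (fst p) - s0 (fst (snd p)) \<le> arc_weight a (snd (snd p))
     \<and> (\<forall>s. s (fst p) - s (fst (snd p)) \<le> arc_weight a (snd (snd p)) \<longrightarrow> satisfies s a)"
  proof
    fix a assume "a \<in> A"
    then obtain x y v where "v \<in> arc_wdom a \<and> x \<in> V \<and> y \<in> V \<and> s0 x - s0 y \<le> arc_weight a v
          \<and> (\<forall>s. s x - s y \<le> arc_weight a v \<longrightarrow> satisfies s a)"
      using witness[of V a s0] wfA finV s0 unfolding feasible_def by blast
    then show "\<exists>p. snd (snd p) \<in> arc_wdom a \<and> fst p \<in> V \<and> fst (snd p) \<in> V
     \<and> s0 (fst p) - s0 (fst (snd p)) \<le> arc_weight a (snd (snd p))
     \<and> (\<forall>s. s (fst p) - s (fst (snd p)) \<le> arc_weight a (snd (snd p)) \<longrightarrow> satisfies s a)"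
      by (intro exI[of _ "(x,y,v)"]) simp
  qed
  then obtain p where p: "\<forall>a\<in>A. snd (snd (p a)) \<in> arc_wdom a \<and> fst (p a) \<in> V \<and> fst (snd (p a)) \<in> V
     \<and> s0 (fst (p a)) - s0 (fst (snd (p a))) \<le> arc_weight a (snd (snd (p a)))
     \<and> (\<forall>s. s (fst (p a)) - s (fst (snd (p a))) \<le> arc_weight a (snd (snd (p a))) \<longrightarrow> satisfies s a)"
    by (metis bchoice)
  define X where "X a = fst (p a)" for a
  define Y where "Y a = fst (snd (p a))" for a
  define Wv where "Wv a = snd (snd (p a))" for a
  define wi where "wi a = \<lfloor>arc_weight a (Wv a)\<rfloor>" for a
  have wdom: "\<And>a. a \<in> A \<Longrightarrow> Wv a \<in> arc_wdom a" using p Wv_def by auto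
  have wiw: "\<And>a. a \<in> A \<Longrightarrow> real_of_int (wi a) = arc_weight a (Wv a)"
  proof -
    fix a assume a: "a \<in> A"
    then have "arc_weight a (Wv a) \<in> \<int>" using assms(2) wdom unfolding integer_weights_def by auto
    then show "real_of_int (wi a) = arc_weight a (Wv a)" unfolding wi_def
      by (metis Ints_cases floor_of_int)
  qed
  have s0c: "\<And>a. a \<in> A \<Longrightarrow> s0 (X a) - s0 (Y a) \<le> real_of_int (wi a)"
    using p wiw X_def Y_def Wv_def by auto
  have satc: "\<And>a s. a \<in> A \<Longrightarrow> s (X a) - s (Y a) \<le> real_of_int (wi a) \<Longrightarrow> satisfies s a"
    using p wiw X_def Y_def Wv_def by auto
  define sol where "sol g \<longleftrightarrow> (\<forall>a\<in>A. g (X a) - g (Y a) \<le> wi a)" for g :: "'v \<Rightarrow> int"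
  define f where "f v = \<lfloor>s0 v\<rfloor>" for v
  have solf: "sol f" unfolding sol_def
  proof
    fix a assume a: "a \<in> A"
    have "s0 (X a) \<le> s0 (Y a) + of_int (wi a)" using s0c[OF a] by simp
    then have "\<lfloor>s0 (X a)\<rfloor> \<le> \<lfloor>s0 (Y a) + of_int (wi a)\<rfloor>" by (rule floor_mono)
    then show "f (X a) - f (Y a) \<le> wi a" unfolding f_def by simp
  qed
  define M where "M = Max (f ` V)"
  define g0 where "g0 v = f v - M" for v
  define P where "P g \<longleftrightarrow> sol g \<and> (\<forall>v\<in>V. g v \<le> 0)" for g
  have "P g0" unfolding P_def
  proof
    show "sol g0" using solf unfolding sol_def g0_def by auto
    show "\<forall>v\<in>V. g0 v \<le> 0" unfolding g0_def M_def using finV by auto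
  qed
  define m where "m g = nat (- (\<Sum>v\<in>V. g v))" for g :: "'v \<Rightarrow> int"
  obtain g where Pg: "P g" and gmin: "\<And>h. P h \<Longrightarrow> m g \<le> m h"
    using ex_has_least_nat[of P g0 m, OF \<open>P g0\<close>] by blast
  have solg: "sol g" and gle: "\<And>v. v \<in> V \<Longrightarrow> g v \<le> 0" using Pg unfolding P_def by auto
  have cross: "\<exists>a\<in>A. g (X a) \<le> c \<and> c < g (Y a) \<and> g (Y a) - g (X a) \<le> - wi a"
    if c1: "c \<le> -1" and v0: "v0 \<in> V" "g v0 \<le> c" for c v0
  proof (rule ccontr)
    assume nc: "\<not> ?thesis"
    define h where "h v = (if g v \<le> c then g v + 1 else g v)" for v
    have "sol h" unfolding sol_def
    proof
      fix a assume a: "a \<in> A"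
      have "g (X a) - g (Y a) \<le> wi a" using solg a unfolding sol_def by auto
      then show "h (X a) - h (Y a) \<le> wi a" using nc a unfolding h_def by force
    qed
    moreover have "\<forall>v\<in>V. h v \<le> 0" using gle c1 unfolding h_def by auto
    ultimately have "P h" unfolding P_def by auto
    have "(\<Sum>v\<in>V. g v) < (\<Sum>v\<in>V. h v)"
      using finV v0 by (intro sum_strict_mono_ex1) (auto simp: h_def)
    moreover have "(\<Sum>v\<in>V. h v) \<le> 0" using \<open>\<forall>v\<in>V. h v \<le> 0\<close> by (simp add: sum_nonpos)
    ultimately have "m h < m g" unfolding m_def by simp
    with gmin[OF \<open>P h\<close>] show False by simp
  qed
  define T where "T = total_weight A"
  define I where "I a = (if g (Y a) - g (X a) \<le> - wi a then {g (X a)..<g (Y a)} else {})" for a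
  have lower: "- T \<le> real_of_int (g v)" if v: "v \<in> V" for v
  proof (rule ccontr)
    assume "\<not> - T \<le> real_of_int (g v)"
    then have lt: "real_of_int (g v) < - T" by simp
    have sub: "{g v..<0} \<subseteq> (\<Union>a\<in>A. I a)"
    proof
      fix c assume "c \<in> {g v..<0}"
      then have "c \<le> -1" "g v \<le> c" by auto
      then obtain a where "a \<in> A" "g (X a) \<le> c" "c < g (Y a)" "g (Y a) - g (X a) \<le> - wi a"
        using cross v by blast
      then show "c \<in> (\<Union>a\<in>A. I a)" unfolding I_def by auto
    qed
    have "card {g v..<0} \<le> card (\<Union>a\<in>A. I a)"
      using sub finA by (intro card_mono) (auto simp: I_def)
    also have "\<dots> \<le> (\<Sum>a\<in>A. card (I a))" by (rule card_UN_le[OF finA])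
    finally have c1: "real (card {g v..<0}) \<le> (\<Sum>a\<in>A. real (card (I a)))"
      by (metis of_nat_le_iff of_nat_sum)
    have "(\<Sum>a\<in>A. real (card (I a))) \<le> (\<Sum>a\<in>A. \<Sum>u\<in>arc_wdom a. \<bar>arc_weight a u\<bar>)"
    proof (rule sum_mono)
      fix a assume a: "a \<in> A"
      have "real (card (I a)) \<le> \<bar>real_of_int (wi a)\<bar>"
        unfolding I_def by auto
      also have "\<dots> = \<bar>arc_weight a (Wv a)\<bar>" using wiw a by simp
      also have "\<dots> \<le> (\<Sum>u\<in>arc_wdom a. \<bar>arc_weight a u\<bar>)"
      proof (rule member_le_sum)
        show "Wv a \<in> arc_wdom a" using wdom a .
        have "wf_hyperarc V a" using wfA a by auto
        then show "finite (arc_wdom a)" using finV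
          by (cases a) (auto intro: finite_subset)
      qed auto
      finally show "real (card (I a)) \<le> (\<Sum>u\<in>arc_wdom a. \<bar>arc_weight a u\<bar>)" .
    qed
    then have "real (card {g v..<0}) \<le> T" using c1 unfolding T_def total_weight_def by linarith
    moreover have "real (card {g v..<0}) = - real_of_int (g v)" using gle[OF v] by simp
    ultimately show False using lt by simp
  qed
  have T0: "0 \<le> T" unfolding T_def total_weight_def by (intro sum_nonneg) auto
  show ?thesis
  proof (intro exI[of _ "\<lambda>v. real_of_int (g v)"] conjI ballI)
    show "feasible A (\<lambda>v. real_of_int (g v))" unfolding feasible_def
    proof
      fix a assume a: "a \<in> A"
      have "g (X a) - g (Y a) \<le> wi a" using solg a unfolding sol_def by auto
      then have "real_of_int (g (X a)) - real_of_int (g (Y a)) \<le> real_of_int (wi a)"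
        by (metis of_int_diff of_int_le_iff)
      then show "satisfies (\<lambda>v. real_of_int (g v)) a" by (rule satc[OF a, of "\<lambda>v. real_of_int (g v)"])
    qed
    fix v assume v: "v \<in> V"
    show "real_of_int (g v) \<in> \<int>" by simp
    show "- total_weight A \<le> real_of_int (g v)" using lower[OF v] T_def by simp
    show "real_of_int (g v) \<le> total_weight A" using gle[OF v] T0 T_def by simp
  qed
qed

end
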